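(* Let $K$ be any number field. There do not exist finite extensions $L/K$ and $M/K$ with $[L:K]=4$, $t_K(L)=1$ and $\tau_K(M,L)=2$.
   Context: Extensions lie in a fixed algebraic closure. For $L/K$ with Galois closure $\tilde L$, $G=\mathrm{Gal}(\tilde L/K)$, $H=\mathrm{Gal}(\tilde L/L)$, the ascending index is $t_K(L)=[G:H^G]$ where $H^G$ is the normal closure of $H$ in $G$ (the degree of the largest subextension of $L/K$ Galois over $K$). For $M/K$, if $L_1,\dots,L_a$ are all the distinct subfields of $M$ isomorphic to $L$ over $K$, then $\tau_K(M,L)=[L_1\cap\cdots\cap L_a:K]$ if $a\ge1$ and $\tau_K(M,L)=0$ if $a=0$. *)

theory Defs
  imports Complex_Main
begin

text \<open>All fields live inside the fixed algebraically closed field of complex numbers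
  (every number field and its finite extensions embed into the algebraic closure of Q,
  which sits inside C).\<close>

definition is_subfield :: "complex set \<Rightarrow> bool" where
  "is_subfield S \<longleftrightarrow> 0 \<in> S \<and> 1 \<in> S \<and>
     (\<forall>x\<in>S. \<forall>y\<in>S. x + y \<in> S \<and> x * y \<in> S) \<and>
     (\<forall>x\<in>S. - x \<in> S) \<and> (\<forall>x\<in>S. x \<noteq> 0 \<longrightarrow> inverse x \<in> S)"

definition lin_indep_over :: "complex set \<Rightarrow> complex set \<Rightarrow> bool" where
  "lin_indep_over K B \<longleftrightarrow>
     (\<forall>c. (\<forall>b\<in>B. c b \<in> K) \<and> (\<Sum>b\<in>B. c b * b) = 0 \<longrightarrow> (\<forall>b\<in>B. c b = 0))"

definition span_over :: "complex set \<Rightarrow> complex set \<Rightarrow> complex set" where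
  "span_over K B = {x. \<exists>c. (\<forall>b\<in>B. c b \<in> K) \<and> x = (\<Sum>b\<in>B. c b * b)}"

definition is_basis_over :: "complex set \<Rightarrow> complex set \<Rightarrow> complex set \<Rightarrow> bool" where
  "is_basis_over K L B \<longleftrightarrow> finite B \<and> B \<subseteq> L \<and> lin_indep_over K B \<and> L = span_over K B"

definition ext_degree :: "complex set \<Rightarrow> complex set \<Rightarrow> nat" where
  "ext_degree K L = (if \<exists>B. is_basis_over K L B then card (SOME B. is_basis_over K L B) else 0)"

definition finite_ext :: "complex set \<Rightarrow> complex set \<Rightarrow> bool" where
  "finite_ext K L \<longleftrightarrow> is_subfield K \<and> is_subfield L \<and> K \<subseteq> L \<and> (\<exists>B. is_basis_over K L B)"

definition number_field :: "complex set \<Rightarrow> bool" where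
  "number_field K \<longleftrightarrow> finite_ext \<rat> K"

definition K_embedding :: "complex set \<Rightarrow> complex set \<Rightarrow> (complex \<Rightarrow> complex) \<Rightarrow> bool" where
  "K_embedding K E \<sigma> \<longleftrightarrow>
     (\<forall>x\<in>E. \<forall>y\<in>E. \<sigma> (x + y) = \<sigma> x + \<sigma> y \<and> \<sigma> (x * y) = \<sigma> x * \<sigma> y) \<and>
     \<sigma> 1 = 1 \<and> (\<forall>x\<in>K. \<sigma> x = x) \<and> inj_on \<sigma> E"

definition K_isomorphic :: "complex set \<Rightarrow> complex set \<Rightarrow> complex set \<Rightarrow> bool" where
  "K_isomorphic K E E' \<longleftrightarrow> (\<exists>\<sigma>. K_embedding K E \<sigma> \<and> \<sigma> ` E = E')"

text \<open>E/K is Galois (= normal, characteristic 0): every K-embedding of E into the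
  algebraic closure maps E into itself.\<close>
definition galois_over :: "complex set \<Rightarrow> complex set \<Rightarrow> bool" where
  "galois_over K E \<longleftrightarrow> finite_ext K E \<and> (\<forall>\<sigma>. K_embedding K E \<sigma> \<longrightarrow> \<sigma> ` E \<subseteq> E)"

text \<open>Ascending index t_K(L): degree of the largest subextension of L/K Galois over K.\<close>
definition asc_index :: "complex set \<Rightarrow> complex set \<Rightarrow> nat" where
  "asc_index K L = Max {ext_degree K E | E. K \<subseteq> E \<and> E \<subseteq> L \<and> galois_over K E}"

text \<open>tau_K(M,L): degree over K of the intersection of all subfields of M that are
  K-isomorphic to L, or 0 if there are none.\<close>
definition tau_index :: "complex set \<Rightarrow> complex set \<Rightarrow> complex set \<Rightarrow> nat" where
  "tau_index K M L =
     (let S = {L'. L' \<subseteq> M \<and> K_isomorphic K L L'} in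
      if S = {} then 0 else ext_degree K (\<Inter> S))"

end

theory Submission
  imports Defs
begin

lemma sf_0: "is_subfield S \<Longrightarrow> 0 \<in> S" by (simp add: is_subfield_def)
lemma sf_1: "is_subfield S \<Longrightarrow> 1 \<in> S" by (simp add: is_subfield_def)
lemma sf_add: "is_subfield S \<Longrightarrow> x \<in> S \<Longrightarrow> y \<in> S \<Longrightarrow> x + y \<in> S" by (simp add: is_subfield_def)
lemma sf_mult: "is_subfield S \<Longrightarrow> x \<in> S \<Longrightarrow> y \<in> S \<Longrightarrow> x * y \<in> S" by (simp add: is_subfield_def)
lemma sf_neg: "is_subfield S \<Longrightarrow> x \<in> S \<Longrightarrow> - x \<in> S" by (simp add: is_subfield_def)
lemma sf_inv: "is_subfield S \<Longrightarrow> x \<in> S \<Longrightarrow> inverse x \<in> S"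
  by (cases "x = 0") (auto simp add: is_subfield_def)
lemma sf_diff: "is_subfield S \<Longrightarrow> x \<in> S \<Longrightarrow> y \<in> S \<Longrightarrow> x - y \<in> S"
  by (metis diff_conv_add_uminus sf_add sf_neg)
lemma sf_div: "is_subfield S \<Longrightarrow> x \<in> S \<Longrightarrow> y \<in> S \<Longrightarrow> x / y \<in> S"
  by (simp add: divide_inverse sf_inv sf_mult)
lemma sf_sum: assumes "is_subfield S" "finite A" "\<And>a. a \<in> A \<Longrightarrow> f a \<in> S" shows "sum f A \<in> S"
  using assms(2,3) by (induction A rule: finite_induct) (auto simp: sf_0[OF assms(1)] sf_add[OF assms(1)])

lemma indep_sub:
  assumes "lin_indep_over K C" "D \<subseteq> C" "finite C" "0 \<in> K"
    "\<And>x. x \<in> D \<Longrightarrow> e x \<in> K" "(\<Sum>x\<in>D. e x * x) = 0" "x \<in> D"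
  shows "e x = 0"
proof -
  let ?c = "\<lambda>x. if x \<in> D then e x else 0"
  have "(\<Sum>x\<in>C. ?c x * x) = (\<Sum>x\<in>D. e x * x)"
  proof -
    have "(\<Sum>x\<in>C. ?c x * x) = (\<Sum>x\<in>C. if x \<in> D then e x * x else 0)"
      by (rule sum.cong) auto
    also have "\<dots> = (\<Sum>x\<in>C \<inter> D. e x * x)" using assms(3) by (simp add: sum.inter_restrict)
    also have "C \<inter> D = D" using assms(2) by blast
    finally show ?thesis .
  qed
  moreover have "\<forall>b\<in>C. ?c b \<in> K" using assms(4,5) by auto
  ultimately have "\<forall>b\<in>C. ?c b = 0" using assms(1,6) unfolding lin_indep_over_def by (auto dest!: spec[of _ ?c])
  then show ?thesis using assms(2,7) by (metis subsetD)
qed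

lemma span_empty: "span_over K {} = {0}" by (simp add: span_over_def)

lemma steinitz:
  assumes K: "is_subfield K" and fB: "finite B"
  shows "finite C \<Longrightarrow> C \<subseteq> span_over K B \<Longrightarrow> lin_indep_over K C \<Longrightarrow> card C \<le> card B"
  using fB
proof (induction B arbitrary: C rule: finite_induct)
  case empty
  have "0 \<notin> C"
  proof
    assume "0 \<in> C"
    have "(\<lambda>_. 1::complex) 0 = 0"
      by (rule indep_sub[of K C "{0}"]) (use empty \<open>0 \<in> C\<close> K sf_0 sf_1 in auto)
    then show False by simp
  qed
  then have "C = {}" using empty.prems(2) by (auto simp: span_empty)
  then show ?case by simp
next
  case (insert b B0 C)
  have "\<forall>c\<in>C. \<exists>f. (\<forall>y\<in>insert b B0. f y \<in> K) \<and> c = (\<Sum>y\<in>insert b B0. f y * y)"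
    using insert.prems(2) unfolding span_over_def by blast
  then obtain f where f: "\<And>c. c \<in> C \<Longrightarrow> (\<forall>y\<in>insert b B0. f c y \<in> K) \<and> c = (\<Sum>y\<in>insert b B0. f c y * y)"
    by metis
  have fK: "\<And>c y. c \<in> C \<Longrightarrow> y \<in> insert b B0 \<Longrightarrow> f c y \<in> K" using f by blast
  have fsplit: "\<And>c. c \<in> C \<Longrightarrow> c = f c b * b + (\<Sum>y\<in>B0. f c y * y)"
  proof -
    fix c assume "c \<in> C"
    then have "c = (\<Sum>y\<in>insert b B0. f c y * y)" using f by blast
    also have "\<dots> = f c b * b + (\<Sum>y\<in>B0. f c y * y)" using insert.hyps by simp
    finally show "c = f c b * b + (\<Sum>y\<in>B0. f c y * y)" .
  qed
  have cardB: "card (insert b B0) = Suc (card B0)" using insert.hyps by simp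
  show ?case
  proof (cases "\<forall>c\<in>C. f c b = 0")
    case True
    have "C \<subseteq> span_over K B0"
    proof
      fix c assume "c \<in> C"
      then have "c = (\<Sum>y\<in>B0. f c y * y)" using fsplit True by force
      then show "c \<in> span_over K B0" unfolding span_over_def using fK \<open>c \<in> C\<close> by blast
    qed
    then have "card C \<le> card B0" using insert.IH insert.prems by blast
    then show ?thesis using cardB by simp
  next
    case False
    then obtain c0 where c0: "c0 \<in> C" "f c0 b \<noteq> 0" by blast
    define r where "r c = f c b / f c0 b" for c
    define g where "g c = c - r c * c0" for c
    have rK: "\<And>c. c \<in> C \<Longrightarrow> r c \<in> K" unfolding r_def using fK c0 K sf_div by blast
    have gspan: "g c \<in> span_over K B0" if "c \<in> C" for c
    proof -
      have "(\<Sum>y\<in>B0. (f c y - r c * f c0 y) * y) = (\<Sum>y\<in>B0. f c y * y) - r c * (\<Sum>y\<in>B0. f c0 y * y)"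
        by (simp add: algebra_simps sum_subtractf sum_distrib_left)
      also have "\<dots> = (c - f c b * b) - r c * (c0 - f c0 b * b)"
        using fsplit[OF that] fsplit[OF c0(1)] by (metis add_diff_cancel_left')
      also have "\<dots> = g c"
        unfolding g_def r_def using c0(2) by (simp add: field_simps)
      finally have eq: "g c = (\<Sum>y\<in>B0. (f c y - r c * f c0 y) * y)" by simp
      have "\<forall>y\<in>B0. f c y - r c * f c0 y \<in> K"
        using fK[OF that] fK[OF c0(1)] rK[OF that] by (intro ballI sf_diff[OF K] sf_mult[OF K]) auto
      then show ?thesis unfolding span_over_def using eq
        by (intro CollectI exI[of _ "\<lambda>y. f c y - r c * f c0 y"]) simp
    qed
    have z: "0 \<in> K" using K sf_0 by blast
    have inj: "inj_on g (C - {c0})"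
    proof
      fix c c' assume c: "c \<in> C - {c0}" and c': "c' \<in> C - {c0}" and eq: "g c = g c'"
      show "c = c'"
      proof (rule ccontr)
        assume ne: "c \<noteq> c'"
        define e where "e x = (if x = c then 1 else if x = c' then -1 else - (r c - r c'))" for x
        have D: "{c, c', c0} \<subseteq> C" using c c' c0 by blast
        have eK: "\<And>x. x \<in> {c, c', c0} \<Longrightarrow> e x \<in> K"
          unfolding e_def using sf_1[OF K] sf_neg[OF K] sf_diff[OF K] rK c c' by auto
        have "(\<Sum>x\<in>{c, c', c0}. e x * x) = c - c' - (r c - r c') * c0"
        proof -
          have "c0 \<noteq> c" "c0 \<noteq> c'" using c c' by auto
          then show ?thesis using ne by (simp add: e_def algebra_simps)
        qed
        also have "\<dots> = g c - g c'" by (simp add: g_def algebra_simps)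
        finally have "(\<Sum>x\<in>{c, c', c0}. e x * x) = 0" using eq by simp
        note ii = indep_sub[OF insert.prems(3) D insert.prems(1) z eK this]
        then have "e c = 0" by simp
        then show False by (simp add: e_def)
      qed
    qed
    have indep: "lin_indep_over K (g ` (C - {c0}))"
      unfolding lin_indep_over_def
    proof (intro allI impI)
      fix d assume d: "(\<forall>y\<in>g ` (C - {c0}). d y \<in> K) \<and> (\<Sum>y\<in>g ` (C - {c0}). d y * y) = 0"
      define s where "s = (\<Sum>c\<in>C - {c0}. d (g c) * r c)"
      define e where "e x = (if x = c0 then - s else d (g x))" for x
      have "0 = (\<Sum>c\<in>C - {c0}. d (g c) * g c)" using d sum.reindex[OF inj, of "\<lambda>y. d y * y"] by (simp add: o_def)
      also have "\<dots> = (\<Sum>c\<in>C - {c0}. d (g c) * c - (d (g c) * r c) * c0)"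
        by (rule sum.cong) (auto simp: g_def algebra_simps)
      also have "\<dots> = (\<Sum>c\<in>C - {c0}. d (g c) * c) - s * c0"
        by (simp add: sum_subtractf sum_distrib_right s_def)
      also have "\<dots> = (\<Sum>x\<in>C. e x * x)"
      proof -
        have "(\<Sum>x\<in>C. e x * x) = e c0 * c0 + (\<Sum>x\<in>C - {c0}. e x * x)"
          using c0(1) insert.prems(1) by (simp add: sum.remove)
        also have "(\<Sum>x\<in>C - {c0}. e x * x) = (\<Sum>c\<in>C - {c0}. d (g c) * c)"
          by (rule sum.cong) (auto simp: e_def)
        finally show ?thesis by (simp add: e_def)
      qed
      finally have e0: "(\<Sum>x\<in>C. e x * x) = 0" by simp
      have sK: "s \<in> K" unfolding s_def
        using insert.prems(1) d rK by (intro sf_sum[OF K] sf_mult[OF K]) auto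
      have eK: "\<And>x. x \<in> C \<Longrightarrow> e x \<in> K" unfolding e_def using sK sf_neg[OF K] d by auto
      show "\<forall>y\<in>g ` (C - {c0}). d y = 0"
      proof
        fix y assume "y \<in> g ` (C - {c0})"
        then obtain c where c: "c \<in> C - {c0}" "y = g c" by blast
        note ii = indep_sub[OF insert.prems(3) order_refl insert.prems(1) z eK e0]
        have cC: "c \<in> C" using c(1) by blast
        have "e c = 0" using ii cC by blast
        then show "d y = 0" using c by (simp add: e_def)
      qed
    qed
    have "g ` (C - {c0}) \<subseteq> span_over K B0" using gspan by blast
    then have "card (g ` (C - {c0})) \<le> card B0"
      using insert.IH[OF _ _ indep] insert.prems(1) by blast
    then have "card (C - {c0}) \<le> card B0" using card_image[OF inj] by simp
    moreover have "card C = Suc (card (C - {c0}))" using c0(1) insert.prems(1) by (metis card_Suc_Diff1)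
    ultimately show ?thesis using cardB by simp
  qed
qed

lemma basis_card_le:
  assumes K: "is_subfield K" and B: "is_basis_over K E B" and C: "is_basis_over K E C"
  shows "card C \<le> card B"
  using steinitz[OF K, of B C] B C unfolding is_basis_over_def by blast

lemma ext_degree_eq:
  assumes K: "is_subfield K" and B: "is_basis_over K E B"
  shows "ext_degree K E = card B"
proof -
  have "is_basis_over K E (SOME B. is_basis_over K E B)" using B by (rule someI)
  then have "card (SOME B. is_basis_over K E B) = card B"
    using basis_card_le[OF K B] basis_card_le[OF K _ B] by (meson le_antisym)
  then show ?thesis using B unfolding ext_degree_def by auto
qed

lemma ext_degree_pos:
  assumes "ext_degree K E \<noteq> 0"
  obtains B where "is_basis_over K E B" "card B = ext_degree K E"
proof -
  have ex: "\<exists>B. is_basis_over K E B" using assms unfolding ext_degree_def by presburger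
  then have "is_basis_over K E (SOME B. is_basis_over K E B)" by (rule someI_ex)
  moreover have "card (SOME B. is_basis_over K E B) = ext_degree K E" using ex unfolding ext_degree_def by simp
  ultimately show ?thesis using that by blast
qed

lemma emb_0:
  assumes "K_embedding K E \<sigma>" "is_subfield E" shows "\<sigma> 0 = 0"
proof -
  have "\<sigma> (0 + 0) = \<sigma> 0 + \<sigma> 0" using assms sf_0 unfolding K_embedding_def by blast
  then show ?thesis by simp
qed

lemma emb_neg:
  assumes "K_embedding K E \<sigma>" "is_subfield E" "x \<in> E" shows "\<sigma> (- x) = - \<sigma> x"
proof -
  have "\<sigma> (x + - x) = \<sigma> x + \<sigma> (- x)" using assms sf_neg unfolding K_embedding_def by blast
  then show ?thesis using emb_0[OF assms(1,2)] by (simp add: eq_neg_iff_add_eq_0 add.commute)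
qed

lemma emb_inv:
  assumes "K_embedding K E \<sigma>" "is_subfield E" "x \<in> E" "x \<noteq> 0" shows "\<sigma> (inverse x) = inverse (\<sigma> x)"
proof -
  have "\<sigma> (x * inverse x) = \<sigma> x * \<sigma> (inverse x)" using assms sf_inv unfolding K_embedding_def by blast
  moreover have "\<sigma> 1 = 1" using assms unfolding K_embedding_def by blast
  ultimately have "\<sigma> x * \<sigma> (inverse x) = 1" using assms(4) by simp
  then show ?thesis by (simp add: inverse_unique)
qed

lemma emb_nz:
  assumes "K_embedding K E \<sigma>" "is_subfield E" "x \<in> E" "x \<noteq> 0" shows "\<sigma> x \<noteq> 0"
proof -
  have "inj_on \<sigma> E" using assms unfolding K_embedding_def by blast
  then show ?thesis using emb_0[OF assms(1,2)] assms(3,4) sf_0[OF assms(2)] by (metis inj_on_def)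
qed

lemma emb_sum:
  assumes "K_embedding K E \<sigma>" "is_subfield E" "finite A" "\<And>a. a \<in> A \<Longrightarrow> f a \<in> E"
  shows "\<sigma> (sum f A) = (\<Sum>a\<in>A. \<sigma> (f a))"
  using assms(3,4)
proof (induction A rule: finite_induct)
  case empty then show ?case using emb_0[OF assms(1,2)] by simp
next
  case (insert a A)
  have "sum f A \<in> E" using insert sf_sum[OF assms(2)] by blast
  moreover have "f a \<in> E" using insert by blast
  ultimately have "\<sigma> (f a + sum f A) = \<sigma> (f a) + \<sigma> (sum f A)"
    using assms(1) unfolding K_embedding_def by blast
  then show ?case using insert by simp
qed

lemma emb_image_subfield:
  assumes "K_embedding K E \<sigma>" "is_subfield E" shows "is_subfield (\<sigma> ` E)"
proof -
  have h: "\<forall>x\<in>E. \<forall>y\<in>E. \<sigma> (x + y) = \<sigma> x + \<sigma> y \<and> \<sigma> (x * y) = \<sigma> x * \<sigma> y" "\<sigma> 1 = 1"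
    using assms(1) unfolding K_embedding_def by blast+
  have "0 \<in> \<sigma> ` E" using emb_0[OF assms] sf_0[OF assms(2)] by (metis image_eqI)
  moreover have "1 \<in> \<sigma> ` E" using h(2) sf_1[OF assms(2)] by (metis image_eqI)
  moreover have "\<forall>x\<in>\<sigma> ` E. \<forall>y\<in>\<sigma> ` E. x + y \<in> \<sigma> ` E \<and> x * y \<in> \<sigma> ` E"
  proof (intro ballI)
    fix x y assume "x \<in> \<sigma> ` E" "y \<in> \<sigma> ` E"
    then obtain a b where ab: "a \<in> E" "b \<in> E" "x = \<sigma> a" "y = \<sigma> b" by blast
    then have "x + y = \<sigma> (a + b)" "x * y = \<sigma> (a * b)" using h(1) by auto
    moreover have "a + b \<in> E" "a * b \<in> E" using ab sf_add[OF assms(2)] sf_mult[OF assms(2)] by auto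
    ultimately show "x + y \<in> \<sigma> ` E \<and> x * y \<in> \<sigma> ` E" by blast
  qed
  moreover have "\<forall>x\<in>\<sigma> ` E. - x \<in> \<sigma> ` E"
  proof
    fix x assume "x \<in> \<sigma> ` E"
    then obtain a where a: "a \<in> E" "x = \<sigma> a" by blast
    then have "- x = \<sigma> (- a)" using emb_neg[OF assms] by simp
    then show "- x \<in> \<sigma> ` E" using a sf_neg[OF assms(2)] by blast
  qed
  moreover have "\<forall>x\<in>\<sigma> ` E. x \<noteq> 0 \<longrightarrow> inverse x \<in> \<sigma> ` E"
  proof (intro ballI impI)
    fix x assume "x \<in> \<sigma> ` E" "x \<noteq> 0"
    then obtain a where a: "a \<in> E" "x = \<sigma> a" by blast
    then have "a \<noteq> 0" using \<open>x \<noteq> 0\<close> emb_0[OF assms] by auto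
    then have "inverse x = \<sigma> (inverse a)" using emb_inv[OF assms] a by simp
    then show "inverse x \<in> \<sigma> ` E" using a sf_inv[OF assms(2)] by blast
  qed
  ultimately show ?thesis unfolding is_subfield_def by blast
qed

lemma subfield_Inter: "S \<noteq> {} \<Longrightarrow> (\<And>X. X \<in> S \<Longrightarrow> is_subfield X) \<Longrightarrow> is_subfield (\<Inter>S)"
  unfolding is_subfield_def by blast

lemma quad:
  assumes K: "is_subfield K" and E: "is_subfield E" and KE: "K \<subseteq> E"
    and B: "is_basis_over K E B" and cB: "card B = 2" and x: "x \<in> E" "x \<notin> K"
  shows "\<exists>p q. p \<in> K \<and> q \<in> K \<and> x * x = p * x + q"
proof (rule ccontr)
  assume nex: "\<not> ?thesis"
  have K0: "0 \<in> K" and K1: "1 \<in> K" and Km1: "-1 \<in> K" using K sf_0 sf_1 sf_neg by blast+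
  have x0: "x \<noteq> 0" "x \<noteq> 1" "x \<noteq> -1" using x K0 K1 Km1 by auto
  have d1: "1 \<noteq> x" using x0 by auto
  have d2: "x \<noteq> x * x" using x0 by (metis mult_cancel_left1)
  have d3: "1 \<noteq> x * x"
  proof
    assume "1 = x * x"
    then have "(x - 1) * (x + 1) = 0" by (simp add: algebra_simps)
    then show False using x0 by (simp add: eq_neg_iff_add_eq_0)
  qed
  define C where "C = {1, x, x * x}"
  have cC: "card C = 3" using d1 d2 d3 unfolding C_def by simp
  have fC: "finite C" unfolding C_def by simp
  have CE: "C \<subseteq> span_over K B"
    using B x sf_1[OF E] sf_mult[OF E] unfolding C_def is_basis_over_def by auto
  have ind: "lin_indep_over K C"
    unfolding lin_indep_over_def
  proof (intro allI impI)
    fix c assume h: "(\<forall>b\<in>C. c b \<in> K) \<and> (\<Sum>b\<in>C. c b * b) = 0"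
    have cK: "c 1 \<in> K" "c x \<in> K" "c (x * x) \<in> K" using h unfolding C_def by auto
    have eq: "c 1 + c x * x + c (x * x) * (x * x) = 0"
      using h d1 d2 d3 unfolding C_def by (simp add: add.assoc)
    have c2: "c (x * x) = 0"
    proof (rule ccontr)
      assume nz: "c (x * x) \<noteq> 0"
      have "x * x = (- c x / c (x * x)) * x + (- c 1 / c (x * x))"
        using eq nz by (simp add: field_simps) (metis add.commute add_eq_0_iff2 mult.commute)
      moreover have "- c x / c (x * x) \<in> K" "- c 1 / c (x * x) \<in> K"
        using cK sf_div[OF K] sf_neg[OF K] by auto
      ultimately show False using nex by blast
    qed
    have c1: "c x = 0"
    proof (rule ccontr)
      assume nz: "c x \<noteq> 0"
      have "c 1 + c x * x = 0" using eq c2 by simp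
      then have "x = - c 1 / c x" using nz by (simp add: field_simps) (metis add.commute add_eq_0_iff2 mult.commute)
      moreover have "- c 1 / c x \<in> K" using cK sf_div[OF K] sf_neg[OF K] by auto
      ultimately show False using x by simp
    qed
    have c0: "c 1 = 0" using eq c1 c2 by simp
    show "\<forall>b\<in>C. c b = 0" using c0 c1 c2 unfolding C_def by auto
  qed
  have "finite B" using B unfolding is_basis_over_def by blast
  then have "card C \<le> card B" using steinitz[OF K _ fC CE ind] by blast
  then show False using cC cB by simp
qed

lemma galois_quad:
  assumes K: "is_subfield K" and E: "is_subfield E" and KE: "K \<subseteq> E"
    and B: "is_basis_over K E B" and cB: "card B = 2"
  shows "galois_over K E"
  unfolding galois_over_def
proof (intro conjI allI impI)
  show "finite_ext K E" unfolding finite_ext_def using K E KE B by blast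
next
  fix \<tau> assume tau: "K_embedding K E \<tau>"
  have hom: "\<forall>x\<in>E. \<forall>y\<in>E. \<tau> (x + y) = \<tau> x + \<tau> y \<and> \<tau> (x * y) = \<tau> x * \<tau> y"
    and fixK: "\<forall>x\<in>K. \<tau> x = x" using tau unfolding K_embedding_def by blast+
  show "\<tau> ` E \<subseteq> E"
  proof
    fix t assume "t \<in> \<tau> ` E"
    then obtain x where x: "x \<in> E" "t = \<tau> x" by blast
    show "t \<in> E"
    proof (cases "x \<in> K")
      case True then show ?thesis using x fixK by simp
    next
      case False
      then obtain p q where pq: "p \<in> K" "q \<in> K" "x * x = p * x + q"
        using quad[OF K E KE B cB x(1)] by blast
      have pE: "p \<in> E" "q \<in> E" using pq KE by auto
      have "\<tau> (x * x) = t * t" using hom x by simp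
      also have "\<tau> (x * x) = \<tau> (p * x) + \<tau> q"
        using pq(3) hom x(1) pE sf_mult[OF E] by simp
      also have "\<tau> (p * x) = p * t" using hom x pE fixK pq by simp
      finally have h1: "t * t = p * t + q" using fixK pq by simp
      have "(t - x) * (t + x - p) = t * t - x * x - p * t + p * x" by (simp add: algebra_simps)
      also have "\<dots> = 0" using h1 pq(3) by simp
      finally have "t = x \<or> t = p - x" by auto
      then show ?thesis using x pE sf_diff[OF E] by auto
    qed
  qed
qed

theorem mainTheorem19:
  fixes K :: "complex set"
  assumes "number_field K"
  shows "\<not> (\<exists>L M. finite_ext K L \<and> finite_ext K M \<and> ext_degree K L = 4 \<and>
                  asc_index K L = 1 \<and> tau_index K M L = 2)"
proof
  assume "\<exists>L M. finite_ext K L \<and> finite_ext K M \<and> ext_degree K L = 4 \<and>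
                  asc_index K L = 1 \<and> tau_index K M L = 2"
  then obtain L M where fL: "finite_ext K L" and dL: "ext_degree K L = 4"
    and aL: "asc_index K L = 1" and tL: "tau_index K M L = 2" by blast
  have Ksf: "is_subfield K" and Lsf: "is_subfield L" and KL: "K \<subseteq> L"
    using fL unfolding finite_ext_def by blast+
  define S where "S = {L'. L' \<subseteq> M \<and> K_isomorphic K L L'}"
  have tS: "tau_index K M L = (if S = {} then 0 else ext_degree K (\<Inter>S))"
    unfolding tau_index_def S_def Let_def by simp
  have Sne: "S \<noteq> {}" using tL tS by (metis zero_neq_numeral)
  define F where "F = \<Inter>S"
  have dF: "ext_degree K F = 2" using tL tS Sne F_def by simp
  obtain BF where BF: "is_basis_over K F BF" and cBF: "card BF = 2"
    using ext_degree_pos[of K F] dF by auto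
  have Ssf: "is_subfield X \<and> K \<subseteq> X" if XS: "X \<in> S" for X
  proof -
    obtain \<sigma>' where s: "K_embedding K L \<sigma>'" "\<sigma>' ` L = X"
      using XS unfolding S_def K_isomorphic_def by blast
    have "is_subfield X" using emb_image_subfield[OF s(1) Lsf] s(2) by simp
    moreover have "K \<subseteq> X"
    proof
      fix k assume "k \<in> K"
      then have "\<sigma>' k = k" "k \<in> L" using s(1) KL unfolding K_embedding_def by auto
      then show "k \<in> X" using s(2) by (metis image_eqI)
    qed
    ultimately show ?thesis by blast
  qed
  have Fsf: "is_subfield F" unfolding F_def using subfield_Inter[OF Sne] Ssf by blast
  have KF: "K \<subseteq> F" unfolding F_def using Ssf by blast
  obtain L1 where L1: "L1 \<in> S" using Sne by blast
  then obtain \<sigma> where sig: "K_embedding K L \<sigma>" and sL: "\<sigma> ` L = L1"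
    unfolding S_def K_isomorphic_def by blast
  have FL1: "F \<subseteq> \<sigma> ` L" unfolding F_def using L1 sL by blast
  have inj: "inj_on \<sigma> L" and hom: "\<forall>x\<in>L. \<forall>y\<in>L. \<sigma> (x + y) = \<sigma> x + \<sigma> y \<and> \<sigma> (x * y) = \<sigma> x * \<sigma> y"
    and s1: "\<sigma> 1 = 1" and fixK: "\<forall>x\<in>K. \<sigma> x = x"
    using sig unfolding K_embedding_def by blast+
  define E where "E = {x \<in> L. \<sigma> x \<in> F}"
  define BE where "BE = {x \<in> L. \<sigma> x \<in> BF}"
  have BFF: "BF \<subseteq> F" and fBF: "finite BF" and indBF: "lin_indep_over K BF" and spF: "F = span_over K BF"
    using BF unfolding is_basis_over_def by blast+
  have imgBE: "\<sigma> ` BE = BF" unfolding BE_def using BFF FL1 by blast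
  have BEL: "BE \<subseteq> L" unfolding BE_def by blast
  have injBE: "inj_on \<sigma> BE" using inj BEL inj_on_subset by blast
  have fBE: "finite BE" using fBF imgBE injBE finite_image_iff by metis
  have cBE: "card BE = 2" using card_image[OF injBE] imgBE cBF by simp
  have BEE: "BE \<subseteq> E" unfolding BE_def E_def using BFF by blast
  have KE: "K \<subseteq> E" unfolding E_def using KL fixK KF by auto
  have Esf: "is_subfield E"
  proof -
    have "0 \<in> E" unfolding E_def using emb_0[OF sig Lsf] sf_0[OF Lsf] sf_0[OF Fsf] by simp
    moreover have "1 \<in> E" unfolding E_def using s1 sf_1[OF Lsf] sf_1[OF Fsf] by simp
    moreover have "\<forall>x\<in>E. \<forall>y\<in>E. x + y \<in> E \<and> x * y \<in> E"
      unfolding E_def using hom sf_add[OF Lsf] sf_mult[OF Lsf] sf_add[OF Fsf] sf_mult[OF Fsf] by simp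
    moreover have "\<forall>x\<in>E. - x \<in> E"
      unfolding E_def using emb_neg[OF sig Lsf] sf_neg[OF Lsf] sf_neg[OF Fsf] by simp
    moreover have "\<forall>x\<in>E. x \<noteq> 0 \<longrightarrow> inverse x \<in> E"
      unfolding E_def using emb_inv[OF sig Lsf] sf_inv[OF Lsf] sf_inv[OF Fsf] by simp
    ultimately show ?thesis unfolding is_subfield_def by blast
  qed
  have lin: "\<sigma> (\<Sum>b\<in>BE. c b * b) = (\<Sum>b\<in>BE. c b * \<sigma> b)" if cK: "\<And>b. b \<in> BE \<Longrightarrow> c b \<in> K" for c
  proof -
    have "\<sigma> (\<Sum>b\<in>BE. c b * b) = (\<Sum>b\<in>BE. \<sigma> (c b * b))"
      using cK KL BEL by (intro emb_sum[OF sig Lsf fBE] sf_mult[OF Lsf]) auto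
    also have "\<dots> = (\<Sum>b\<in>BE. c b * \<sigma> b)"
    proof (rule sum.cong)
      fix b assume b: "b \<in> BE"
      then have "c b \<in> L" "b \<in> L" "c b \<in> K" using cK KL BEL by auto
      then show "\<sigma> (c b * b) = c b * \<sigma> b" using hom fixK by simp
    qed simp
    finally show ?thesis .
  qed
  have sumL: "(\<Sum>b\<in>BE. c b * b) \<in> L" if cK: "\<And>b. b \<in> BE \<Longrightarrow> c b \<in> K" for c
    using cK KL BEL by (intro sf_sum[OF Lsf fBE] sf_mult[OF Lsf]) auto
  have reidx: "(\<Sum>b\<in>BE. h (\<sigma> b) * \<sigma> b) = (\<Sum>y\<in>BF. h y * y)" for h
    using sum.reindex[OF injBE, of "\<lambda>y. h y * y"] imgBE by (simp add: o_def)
  define iv where "iv = inv_into L \<sigma>"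
  have ivs: "iv (\<sigma> b) = b" if "b \<in> BE" for b unfolding iv_def using inv_into_f_f[OF inj] that BEL by blast
  have indBE: "lin_indep_over K BE"
    unfolding lin_indep_over_def
  proof (intro allI impI)
    fix c assume h: "(\<forall>b\<in>BE. c b \<in> K) \<and> (\<Sum>b\<in>BE. c b * b) = 0"
    define hh where "hh y = c (iv y)" for y
    have "(\<Sum>y\<in>BF. hh y * y) = (\<Sum>b\<in>BE. hh (\<sigma> b) * \<sigma> b)" using reidx by simp
    also have "\<dots> = (\<Sum>b\<in>BE. c b * \<sigma> b)" unfolding hh_def using ivs by simp
    also have "\<dots> = \<sigma> 0"
    proof -
      have cK: "\<And>b. b \<in> BE \<Longrightarrow> c b \<in> K" using h by blast
      show ?thesis using lin[of c, OF cK] h by simp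
    qed
    finally have z: "(\<Sum>y\<in>BF. hh y * y) = 0" using emb_0[OF sig Lsf] by simp
    have "\<forall>y\<in>BF. hh y \<in> K" using h imgBE ivs unfolding hh_def by auto
    then have "\<forall>y\<in>BF. hh y = 0" using indBF z unfolding lin_indep_over_def by blast
    then show "\<forall>b\<in>BE. c b = 0" using imgBE ivs unfolding hh_def by (metis image_eqI)
  qed
  have spE: "E = span_over K BE"
  proof
    show "E \<subseteq> span_over K BE"
    proof
      fix x assume "x \<in> E"
      then have xL: "x \<in> L" and "\<sigma> x \<in> span_over K BF" using spF unfolding E_def by auto
      then obtain hh where hK: "\<forall>y\<in>BF. hh y \<in> K" and hx: "\<sigma> x = (\<Sum>y\<in>BF. hh y * y)"
        unfolding span_over_def by blast
      define c where "c b = hh (\<sigma> b)" for b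
      have cK: "\<And>b. b \<in> BE \<Longrightarrow> c b \<in> K" unfolding c_def using hK imgBE by blast
      have "\<sigma> (\<Sum>b\<in>BE. c b * b) = \<sigma> x" using lin[of c, OF cK] reidx hx unfolding c_def by simp
      then have "x = (\<Sum>b\<in>BE. c b * b)" using inj xL sumL[of c, OF cK] by (metis inj_on_def)
      then show "x \<in> span_over K BE" unfolding span_over_def using cK by blast
    qed
  next
    show "span_over K BE \<subseteq> E"
    proof
      fix x assume "x \<in> span_over K BE"
      then obtain c where cK: "\<And>b. b \<in> BE \<Longrightarrow> c b \<in> K" and xs: "x = (\<Sum>b\<in>BE. c b * b)"
        unfolding span_over_def by blast
      define hh where "hh y = c (iv y)" for y
      have "\<sigma> x = (\<Sum>b\<in>BE. c b * \<sigma> b)" using lin[of c, OF cK] xs by simp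
      also have "\<dots> = (\<Sum>b\<in>BE. hh (\<sigma> b) * \<sigma> b)" unfolding hh_def using ivs by simp
      also have "\<dots> = (\<Sum>y\<in>BF. hh y * y)" using reidx by simp
      finally have sx: "\<sigma> x = (\<Sum>y\<in>BF. hh y * y)" .
      have "\<forall>y\<in>BF. hh y \<in> K" using cK imgBE ivs unfolding hh_def by auto
      then have "\<sigma> x \<in> span_over K BF"
        unfolding span_over_def using sx by blast
      then show "x \<in> E" unfolding E_def using spF sumL[of c, OF cK] xs by simp
    qed
  qed
  have BEb: "is_basis_over K E BE" unfolding is_basis_over_def using fBE BEE indBE spE by blast
  have galE: "galois_over K E" using galois_quad[OF Ksf Esf KE BEb cBE] .
  have dE: "ext_degree K E = 2" using ext_degree_eq[OF Ksf BEb] cBE by simp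
  have EL: "E \<subseteq> L" unfolding E_def by blast
  define A where "A = {ext_degree K E' | E'. K \<subseteq> E' \<and> E' \<subseteq> L \<and> galois_over K E'}"
  have twoA: "2 \<in> A" unfolding A_def using KE EL galE dE by force
  obtain BL where BL: "is_basis_over K L BL" "card BL = 4" using ext_degree_pos[of K L] dL by auto
  have Ale: "A \<subseteq> {..4}"
  proof
    fix n assume "n \<in> A"
    then obtain E' where E': "K \<subseteq> E'" "E' \<subseteq> L" "galois_over K E'" "n = ext_degree K E'"
      unfolding A_def by blast
    then obtain B' where B': "is_basis_over K E' B'" unfolding galois_over_def finite_ext_def by blast
    have "n = card B'" using ext_degree_eq[OF Ksf B'] E'(4) by simp
    moreover have "card B' \<le> card BL"
      using steinitz[OF Ksf, of BL B'] B' BL(1) E'(2) unfolding is_basis_over_def by blast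
    ultimately show "n \<in> {..4}" using BL(2) by simp
  qed
  have "finite A" using Ale finite_subset by blast
  then have "2 \<le> Max A" using twoA by simp
  moreover have "asc_index K L = Max A" unfolding asc_index_def A_def by simp
  ultimately show False using aL by simp
qed

end
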